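(* Let $p\equiv 1\pmod 4$ be a prime. For all $\delta_1,\delta_2\in\{\pm1\}$, the residue class \[ 2\det\left[\left(\tfrac{j+k}{p}\right)+\left(\tfrac{j-k}{p}\right)+\delta_1\left(\tfrac{j^2+\delta_2k^2}{p}\right)\right]_{0\le j,k\le (p-1)/2} \] is a nonzero quadratic residue modulo $p$. More precisely, writing $p=4m+1$, \[ \det\left[\left(\tfrac{j+k}{p}\right)+\left(\tfrac{j-k}{p}\right)+\delta_1\left(\tfrac{j^2+\delta_2k^2}{p}\right)\right]_{0\le j,k\le 2m} \equiv(-1)^{m(2m+1)}\delta_1^{2m+1}\delta_2^{m(2m+1)}\left(\prod_{r=0}^{2m}\binom{2m}{r}\right)\prod_{0\le i<j\le 2m}(j^2-i^2)^2\pmod p. \]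
   Context: $\left(\frac{t}{p}\right)$ denotes the Legendre symbol modulo $p$, with $\left(\frac{0}{p}\right)=0$. *)

theory Defs
  imports "HOL-Number_Theory.Number_Theory" "Jordan_Normal_Form.Determinant"
begin

definition legmat :: "int \<Rightarrow> nat \<Rightarrow> int \<Rightarrow> int \<Rightarrow> int mat" where
  "legmat p m d1 d2 = mat (2*m+1) (2*m+1)
     (\<lambda>(j,k). Legendre (int j + int k) p + Legendre (int j - int k) p
              + d1 * Legendre (int j ^ 2 + d2 * int k ^ 2) p)"

end

theory Submission
  imports Defs
begin


lemma det_rowscale:
  fixes c :: "nat \<Rightarrow> 'a::comm_ring_1"
  shows "det (mat n n (\<lambda>(i,j). c i * f i j)) = prod c {0..<n} * det (mat n n (\<lambda>(i,j). f i j))"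
proof -
  have A: "mat n n (\<lambda>(i,j). c i * f i j) \<in> carrier_mat n n" by auto
  have B: "mat n n (\<lambda>(i,j). f i j) \<in> carrier_mat n n" by auto
  show ?thesis unfolding det_def'[OF A] det_def'[OF B] sum_distrib_left
  proof (rule sum.cong[OF refl])
    fix q assume q: "q \<in> {q. q permutes {0..<n}}"
    have "(\<Prod>i = 0..<n. mat n n (\<lambda>(i,j). c i * f i j) $$ (i, q i)) = (\<Prod>i = 0..<n. c i * f i (q i))"
      by (rule prod.cong, insert q, auto simp: permutes_in_image)
    moreover have "(\<Prod>i = 0..<n. mat n n (\<lambda>(i,j). f i j) $$ (i, q i)) = (\<Prod>i = 0..<n. f i (q i))"
      by (rule prod.cong, insert q, auto simp: permutes_in_image)
    ultimately show "signof q * (\<Prod>i = 0..<n. mat n n (\<lambda>(i,j). c i * f i j) $$ (i, q i)) =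
      prod c {0..<n} * (signof q * (\<Prod>i = 0..<n. mat n n (\<lambda>(i,j). f i j) $$ (i, q i)))"
      by (simp add: prod.distrib algebra_simps)
  qed
qed

lemma vdm_rev:
  fixes x :: "nat \<Rightarrow> 'a::comm_ring_1"
  shows "det (mat n n (\<lambda>(i,j). x i ^ (n - 1 - j))) = (\<Prod>j<n. \<Prod>i<j. (x i - x j))"
proof (induction n)
  case 0
  then show ?case by (simp add: det_def)
next
  case (Suc n)
  define A where "A = mat (Suc n) (Suc n) (\<lambda>(i,j). x i ^ (Suc n - 1 - j))"
  define E where "E = mat (Suc n) (Suc n) (\<lambda>(i,j). (if i = j then 1 else 0) + (if i = Suc j then - x n else 0))"
  define B where "B = mat (Suc n) (Suc n) (\<lambda>(i,j). if j < n then x i ^ (n - 1 - j) * (x i - x n) else 1)"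
  have Ac: "A \<in> carrier_mat (Suc n) (Suc n)" and Ec: "E \<in> carrier_mat (Suc n) (Suc n)"
    and Bc: "B \<in> carrier_mat (Suc n) (Suc n)" unfolding A_def E_def B_def by auto
  have dg: "diag_mat E = replicate (Suc n) 1"
    by (rule nth_equalityI) (auto simp: E_def diag_mat_def simp del: upt_Suc replicate_Suc)
  have detE: "det E = 1"
  proof -
    have "det E = prod_list (diag_mat E)" by (rule det_lower_triangular[OF _ Ec]) (auto simp: E_def)
    then show ?thesis by (simp add: dg del: replicate_Suc)
  qed
  have AE: "A * E = B"
  proof (rule eq_matI)
    fix i j assume i: "i < dim_row B" and j: "j < dim_col B"
    then have i: "i < Suc n" and j: "j < Suc n" by (auto simp: B_def)
    have "(A * E) $$ (i,j) = (\<Sum>k\<in>{0..<Suc n}. x i ^ (n - k) * ((if k = j then 1 else 0) + (if k = Suc j then - x n else 0)))"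
      using i j by (auto simp: A_def E_def scalar_prod_def intro!: sum.cong)
    also have "\<dots> = (\<Sum>k\<in>{0..<Suc n}. (if k = j then x i ^ (n - k) else 0)) + (\<Sum>k\<in>{0..<Suc n}. (if k = Suc j then - x n * x i ^ (n - k) else 0))"
      unfolding sum.distrib[symmetric] by (rule sum.cong, auto)
    also have "\<dots> = B $$ (i,j)"
    proof (cases "j < n")
      case True
      have "n - j = Suc (n - 1 - j)" using True by auto
      then show ?thesis using True i j by (simp add: B_def algebra_simps sum.delta)
    next
      case False
      then show ?thesis using i j by (simp add: B_def)
    qed
    finally show "(A * E) $$ (i,j) = B $$ (i,j)" .
  qed (auto simp: A_def E_def B_def)
  have "det A = det B" using det_mult[OF Ac Ec] detE AE by simp
  also have "det B = (\<Sum>j<Suc n. B $$ (n,j) * cofactor B n j)"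
    by (rule laplace_expansion_row[OF Bc], simp)
  also have "\<dots> = cofactor B n n"
    by (simp add: B_def)
  also have "\<dots> = det (mat_delete B n n)" by (simp add: cofactor_def)
  also have "mat_delete B n n = mat n n (\<lambda>(i,j). (x i - x n) * x i ^ (n - 1 - j))"
    by (rule eq_matI, auto simp: mat_delete_def B_def mult.commute)
  also have "det \<dots> = prod (\<lambda>i. x i - x n) {0..<n} * det (mat n n (\<lambda>(i,j). x i ^ (n - 1 - j)))"
    by (rule det_rowscale)
  also have "\<dots> = (\<Prod>j<Suc n. \<Prod>i<j. (x i - x j))"
    using Suc.IH by (simp add: atLeast0LessThan mult.commute)
  finally show ?case by (simp add: A_def)
qed

lemma vdm_std:
  fixes x :: "nat \<Rightarrow> 'a::comm_ring_1"
  shows "det (mat n n (\<lambda>(i,j). x i ^ j)) = (\<Prod>j<n. \<Prod>i<j. (x j - x i))"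
proof (induction n)
  case 0
  then show ?case by (simp add: det_def)
next
  case (Suc n)
  define A where "A = mat (Suc n) (Suc n) (\<lambda>(i,j). x i ^ j)"
  define E where "E = mat (Suc n) (Suc n) (\<lambda>(i,j). (if i = j then 1 else 0) + (if Suc i = j then - x n else 0))"
  define B where "B = mat (Suc n) (Suc n) (\<lambda>(i,j). if j = 0 then 1 else x i ^ (j - 1) * (x i - x n))"
  have Ac: "A \<in> carrier_mat (Suc n) (Suc n)" and Ec: "E \<in> carrier_mat (Suc n) (Suc n)"
    and Bc: "B \<in> carrier_mat (Suc n) (Suc n)" unfolding A_def E_def B_def by auto
  have dg: "diag_mat E = replicate (Suc n) 1"
    by (rule nth_equalityI) (auto simp: E_def diag_mat_def simp del: upt_Suc replicate_Suc)
  have detE: "det E = 1"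
  proof -
    have "det E = prod_list (diag_mat E)" by (rule det_upper_triangular[OF _ Ec]) (auto simp: E_def upper_triangular_def)
    then show ?thesis by (simp add: dg del: replicate_Suc)
  qed
  have AE: "A * E = B"
  proof (rule eq_matI)
    fix i j assume i: "i < dim_row B" and j: "j < dim_col B"
    then have i: "i < Suc n" and j: "j < Suc n" by (auto simp: B_def)
    have "(A * E) $$ (i,j) = (\<Sum>k\<in>{0..<Suc n}. x i ^ k * ((if k = j then 1 else 0) + (if Suc k = j then - x n else 0)))"
      using i j by (auto simp: A_def E_def scalar_prod_def intro!: sum.cong)
    also have "\<dots> = (\<Sum>k\<in>{0..<Suc n}. (if k = j then x i ^ k else 0)) + (\<Sum>k\<in>{0..<Suc n}. (if Suc k = j then - x n * x i ^ k else 0))"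
      unfolding sum.distrib[symmetric] by (rule sum.cong[OF refl]) simp
    also have "\<dots> = B $$ (i,j)"
    proof (cases "j = 0")
      case False
      then obtain j' where j': "j = Suc j'" by (cases j) auto
      have "(\<Sum>k\<in>{0..<Suc n}. (if Suc k = j then - x n * x i ^ k else 0)) = (\<Sum>k\<in>{0..<Suc n}. (if k = j' then - x n * x i ^ k else 0))"
        using j' by (intro sum.cong) auto
      also have "\<dots> = - x n * x i ^ j'" using j j' by (simp add: sum.delta)
      finally show ?thesis using j' i j by (cases "Suc j' = n") (auto simp: B_def algebra_simps sum.delta)
    next
      case True
      then show ?thesis using i j by (simp add: B_def)
    qed
    finally show "(A * E) $$ (i,j) = B $$ (i,j)" .
  qed (auto simp: A_def E_def B_def)
  have sgn: "(-1) ^ n * prod (\<lambda>i. x i - x n) {0..<n} = prod (\<lambda>i. x n - x i) {0..<n}"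
  proof -
    have "(-1) ^ n * prod (\<lambda>i. x i - x n) {0..<n} = prod (\<lambda>i. (-1) * (x i - x n)) {0..<n}"
      by (subst prod.distrib) simp
    also have "\<dots> = prod (\<lambda>i. x n - x i) {0..<n}" by (rule prod.cong) auto
    finally show ?thesis .
  qed
  have "det A = det B" using det_mult[OF Ac Ec] detE AE by simp
  also have "det B = (\<Sum>j<Suc n. B $$ (n,j) * cofactor B n j)"
    by (rule laplace_expansion_row[OF Bc], simp)
  also have "\<dots> = cofactor B n 0"
    apply (subst sum.lessThan_Suc_shift) by (simp add: B_def)
  also have "\<dots> = (-1) ^ n * det (mat_delete B n 0)" by (simp add: cofactor_def)
  also have "mat_delete B n 0 = mat n n (\<lambda>(i,j). (x i - x n) * x i ^ j)"
    by (rule eq_matI, auto simp: mat_delete_def B_def mult.commute)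
  also have "det \<dots> = prod (\<lambda>i. x i - x n) {0..<n} * det (mat n n (\<lambda>(i,j). x i ^ j))"
    by (rule det_rowscale)
  also have "(-1) ^ n * (prod (\<lambda>i. x i - x n) {0..<n} * det (mat n n (\<lambda>(i,j). x i ^ j)))
     = (\<Prod>j<Suc n. \<Prod>i<j. (x j - x i))"
    using Suc.IH sgn by (simp add: atLeast0LessThan mult.assoc[symmetric])
  finally show ?case by (simp add: A_def)
qed

lemma sum_parity:
  fixes f :: "nat \<Rightarrow> 'a::comm_monoid_add"
  shows "(\<Sum>k\<le>2*m. f k) = (\<Sum>s\<le>m. f (2*s)) + (\<Sum>s<m. f (2*s+1))"
proof (induction m)
  case 0 then show ?case by simp
next
  case (Suc m)
  have e: "2 * Suc m = Suc (Suc (2*m))" by simp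
  show ?case unfolding e sum.atMost_Suc Suc.IH sum.lessThan_Suc
    by (simp add: add_ac)
qed

lemma even_binom:
  fixes a b :: "'a::comm_ring_1"
  shows "(b + a)^(2*m) + (b - a)^(2*m) = 2 * (\<Sum>s\<le>m. of_nat (2*m choose (2*s)) * a^(2*s) * b^(2*m - 2*s))"
proof -
  define f where "f k = of_nat (2*m choose k) * (a^k + (-a)^k) * b^(2*m-k)" for k
  have "(b + a)^(2*m) + (b - a)^(2*m) = (a + b)^(2*m) + (-a + b)^(2*m)" by (simp add: add.commute)
  also have "\<dots> = (\<Sum>k\<le>2*m. f k)"
    unfolding binomial_ring f_def sum.distrib[symmetric] by (rule sum.cong) (auto simp: algebra_simps)
  also have "\<dots> = (\<Sum>s\<le>m. f (2*s)) + (\<Sum>s<m. f (2*s+1))" by (rule sum_parity)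
  also have "(\<Sum>s<m. f (2*s+1)) = 0" unfolding f_def by (simp add: power_minus_odd)
  also have "(\<Sum>s\<le>m. f (2*s)) = 2 * (\<Sum>s\<le>m. of_nat (2*m choose (2*s)) * a^(2*s) * b^(2*m - 2*s))"
    unfolding f_def sum_distrib_left by (rule sum.cong) (auto simp: algebra_simps)
  finally show ?thesis by simp
qed

lemma factorization:
  fixes m :: nat and d1 d2 :: int
  defines "n \<equiv> 2*m+1"
  defines "X \<equiv> mat n n (\<lambda>(j,e). (int j ^ 2) ^ (n - 1 - e))"
  defines "T \<equiv> mat n n (\<lambda>(e,s). (if e = s then d1 * d2^s * int (2*m choose s) else 0)
                 + (if s \<le> m \<and> e = m + s then 2 * int (2*m choose (2*s)) else 0))"
  defines "Y \<equiv> mat n n (\<lambda>(s,k). (int k ^ 2) ^ s)"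
  shows "X * T * Y = mat n n (\<lambda>(j,k). (int j + int k)^(2*m) + (int j - int k)^(2*m)
                          + d1 * (int j ^ 2 + d2 * int k ^ 2)^(2*m))"
proof (rule eq_matI)
  fix j k assume "j < dim_row (mat n n (\<lambda>(j,k). (int j + int k)^(2*m) + (int j - int k)^(2*m)
                          + d1 * (int j ^ 2 + d2 * int k ^ 2)^(2*m)))"
    "k < dim_col (mat n n (\<lambda>(j,k). (int j + int k)^(2*m) + (int j - int k)^(2*m)
                          + d1 * (int j ^ 2 + d2 * int k ^ 2)^(2*m)))"
  then have j: "j < n" and k: "k < n" by auto
  have XT: "(X * T) $$ (j,s) = (int j ^ 2) ^ (2*m - s) * (d1 * d2^s * int (2*m choose s))
      + (if s \<le> m then (int j ^ 2) ^ (m - s) * (2 * int (2*m choose (2*s))) else 0)" if s: "s < n" for s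
  proof -
    have "(X * T) $$ (j,s) = (\<Sum>e\<in>{0..<n}. (int j ^ 2) ^ (n - 1 - e) *
       ((if e = s then d1 * d2^s * int (2*m choose s) else 0)
                 + (if s \<le> m \<and> e = m + s then 2 * int (2*m choose (2*s)) else 0)))"
      using j s by (auto simp: X_def T_def scalar_prod_def intro!: sum.cong)
    also have "\<dots> = (\<Sum>e\<in>{0..<n}. (if e = s then (int j ^ 2) ^ (n - 1 - e) * (d1 * d2^s * int (2*m choose s)) else 0))
       + (\<Sum>e\<in>{0..<n}. (if e = m + s then (if s \<le> m then (int j ^ 2) ^ (n - 1 - e) * (2 * int (2*m choose (2*s))) else 0) else 0))"
      unfolding sum.distrib[symmetric] by (rule sum.cong[OF refl]) (auto simp: algebra_simps)
    also have "\<dots> = (int j ^ 2) ^ (2*m - s) * (d1 * d2^s * int (2*m choose s))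
      + (if s \<le> m then (int j ^ 2) ^ (m - s) * (2 * int (2*m choose (2*s))) else 0)"
      using s by (simp add: sum.delta n_def)
    finally show ?thesis .
  qed
  have "(X * T * Y) $$ (j,k) = (\<Sum>s\<in>{0..<n}. (X * T) $$ (j,s) * (int k ^ 2) ^ s)"
    using j k by (auto simp: X_def T_def Y_def scalar_prod_def intro!: sum.cong)
  also have "\<dots> = (\<Sum>s\<in>{0..<n}. d1 * (int (2*m choose s) * (d2 * int k ^ 2) ^ s * (int j ^ 2) ^ (2*m - s)))
     + (\<Sum>s\<in>{0..<n}. if s \<le> m then 2 * (int (2*m choose (2*s)) * int k ^ (2*s) * int j ^ (2*m - 2*s)) else 0)"
    unfolding sum.distrib[symmetric]
  proof (rule sum.cong[OF refl])
    fix s assume "s \<in> {0..<n}"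
    then have s: "s < n" by auto
    have a: "(int j ^ 2) ^ (m - s) = int j ^ (2*m - 2*s)" if "s \<le> m"
      using that by (simp add: power_mult[symmetric] diff_mult_distrib2)
    show "(X * T) $$ (j,s) * (int k ^ 2) ^ s = d1 * (int (2*m choose s) * (d2 * int k ^ 2) ^ s * (int j ^ 2) ^ (2*m - s))
      + (if s \<le> m then 2 * (int (2*m choose (2*s)) * int k ^ (2*s) * int j ^ (2*m - 2*s)) else 0)"
      unfolding XT[OF s] using a by (auto simp: algebra_simps power_mult_distrib power_mult[symmetric])
  qed
  also have "(\<Sum>s\<in>{0..<n}. d1 * (int (2*m choose s) * (d2 * int k ^ 2) ^ s * (int j ^ 2) ^ (2*m - s)))
     = d1 * (int j ^ 2 + d2 * int k ^ 2)^(2*m)"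
  proof -
    have "{0..<n} = {..2*m}" by (auto simp: n_def)
    moreover have "(int j ^ 2 + d2 * int k ^ 2)^(2*m) = (d2 * int k ^ 2 + int j ^ 2)^(2*m)" by (simp add: add.commute)
    moreover have "(d2 * int k ^ 2 + int j ^ 2)^(2*m) = (\<Sum>s\<le>2*m. of_nat (2*m choose s) * (d2 * int k ^ 2) ^ s * (int j ^ 2) ^ (2*m - s))"
      by (rule binomial_ring)
    ultimately show ?thesis
      unfolding sum_distrib_left[symmetric] by simp
  qed
  also have "(\<Sum>s\<in>{0..<n}. if s \<le> m then 2 * (int (2*m choose (2*s)) * int k ^ (2*s) * int j ^ (2*m - 2*s)) else 0)
      = (int j + int k)^(2*m) + (int j - int k)^(2*m)"
  proof -
    have "{0..<n} \<inter> {s. s \<le> m} = {..m}" by (auto simp: n_def)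
    then have "(\<Sum>s\<in>{0..<n}. if s \<le> m then 2 * (int (2*m choose (2*s)) * int k ^ (2*s) * int j ^ (2*m - 2*s)) else 0)
       = (\<Sum>s\<le>m. 2 * (int (2*m choose (2*s)) * int k ^ (2*s) * int j ^ (2*m - 2*s)))"
      apply (subst sum.inter_restrict[symmetric, where B="{s. s \<le> m}", simplified])
      by simp_all
    also have "\<dots> = (int j + int k)^(2*m) + (int j - int k)^(2*m)"
      unfolding even_binom sum_distrib_left by (simp add: mult.assoc)
    finally show ?thesis .
  qed
  finally show "(X * T * Y) $$ (j,k) = mat n n (\<lambda>(j,k). (int j + int k)^(2*m) + (int j - int k)^(2*m)
                          + d1 * (int j ^ 2 + d2 * int k ^ 2)^(2*m)) $$ (j,k)"
    using j k by simp
qed (auto simp: X_def Y_def T_def)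

lemma prod_list_map_upt0: "prod_list (map f [0..<n]) = (\<Prod>i<n. f i)"
  by (induction n) auto

lemma twice_sum_lessThan: "2 * (\<Sum>s<(n::nat). s) = n * (n - 1)"
proof (induction n)
  case 0 then show ?case by simp
next
  case (Suc n) then show ?case by (cases n) (auto simp: algebra_simps)
qed

lemma det_main:
  fixes m :: nat and d1 d2 :: int
  assumes m: "m \<ge> 1"
  shows "det (mat (2*m+1) (2*m+1) (\<lambda>(j,k). (int j + int k)^(2*m) + (int j - int k)^(2*m)
                          + d1 * (int j ^ 2 + d2 * int k ^ 2)^(2*m)))
   = (-1) ^ (m * (2*m+1)) * d1 ^ (2*m+1) * d2 ^ (m * (2*m+1))
         * (\<Prod>r\<in>{0..2*m}. int (2*m choose r))
         * (\<Prod>j\<in>{0..2*m}. \<Prod>i\<in>{0..<j}. (int j ^ 2 - int i ^ 2) ^ 2)"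
proof -
  define n where "n = 2*m+1"
  define x where "x j = int j ^ 2" for j
  define X where "X = mat n n (\<lambda>(j,e). (int j ^ 2) ^ (n - 1 - e))"
  define T where "T = mat n n (\<lambda>(e,s). (if e = s then d1 * d2^s * int (2*m choose s) else 0)
                 + (if s \<le> m \<and> e = m + s then 2 * int (2*m choose (2*s)) else 0))"
  define Y where "Y = mat n n (\<lambda>(s,k). (int k ^ 2) ^ s)"
  have Xc: "X \<in> carrier_mat n n" and Tc: "T \<in> carrier_mat n n" and Yc: "Y \<in> carrier_mat n n"
    by (auto simp: X_def T_def Y_def)
  have fac: "X * T * Y = mat n n (\<lambda>(j,k). (int j + int k)^(2*m) + (int j - int k)^(2*m)
                          + d1 * (int j ^ 2 + d2 * int k ^ 2)^(2*m))"
    unfolding X_def T_def Y_def n_def by (rule factorization)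
  have dX: "det X = (\<Prod>j<n. \<Prod>i<j. (x i - x j))"
    unfolding X_def x_def by (rule vdm_rev)
  have "det Y = det (transpose_mat Y)" using det_transpose[OF Yc] by simp
  also have "transpose_mat Y = mat n n (\<lambda>(i,j). x i ^ j)"
    by (rule eq_matI) (auto simp: Y_def x_def)
  also have "det \<dots> = (\<Prod>j<n. \<Prod>i<j. (x j - x i))" by (rule vdm_std)
  finally have dY: "det Y = (\<Prod>j<n. \<Prod>i<j. (x j - x i))" .
  have dgT: "diag_mat T = map (\<lambda>s. d1 * d2^s * int (2*m choose s)) [0..<n]"
    using m by (auto simp: T_def diag_mat_def intro!: map_cong)
  have "det T = prod_list (diag_mat T)"
    by (rule det_lower_triangular[OF _ Tc]) (auto simp: T_def)
  also have "\<dots> = (\<Prod>s<n. d1 * d2^s * int (2*m choose s))"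
    unfolding dgT by (simp add: prod_list_map_upt0)
  also have "\<dots> = d1 ^ n * d2 ^ (\<Sum>s<n. s) * (\<Prod>s<n. int (2*m choose s))"
    by (simp add: prod.distrib power_sum)
  also have "(\<Sum>s<n. s) = m * (2*m+1)"
    using twice_sum_lessThan[of n] by (simp add: n_def)
  finally have dT: "det T = d1 ^ n * d2 ^ (m * (2*m+1)) * (\<Prod>s<n. int (2*m choose s))" .
  have "det X * det Y = (\<Prod>j<n. \<Prod>i<j. (x i - x j) * (x j - x i))"
    unfolding dX dY prod.distrib by simp
  also have "\<dots> = (\<Prod>j<n. \<Prod>i<j. (-1) * (x j - x i)^2)"
    by (intro prod.cong refl) (simp add: power2_eq_square algebra_simps)
  also have "\<dots> = (\<Prod>j<n. (\<Prod>i<j. (-1::int)) * (\<Prod>i<j. (x j - x i)^2))"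
    by (simp only: prod.distrib)
  also have "\<dots> = (\<Prod>j<n. (-1) ^ j * (\<Prod>i<j. (x j - x i)^2))"
    by simp
  also have "\<dots> = (-1) ^ (\<Sum>j<n. j) * (\<Prod>j<n. \<Prod>i<j. (x j - x i)^2)"
    by (simp only: prod.distrib power_sum)
  also have "(\<Sum>j<n. j) = m * (2*m+1)"
    using twice_sum_lessThan[of n] by (simp add: n_def)
  finally have dXY: "det X * det Y = (-1) ^ (m * (2*m+1)) * (\<Prod>j<n. \<Prod>i<j. (x j - x i)^2)" .
  have "det (X * T * Y) = det X * det T * det Y"
    using det_mult[OF mult_carrier_mat[OF Xc Tc] Yc] det_mult[OF Xc Tc] by simp
  also have "\<dots> = (det X * det Y) * det T" by simp
  also have "\<dots> = (-1) ^ (m * (2*m+1)) * d1 ^ (2*m+1) * d2 ^ (m * (2*m+1))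
         * (\<Prod>r\<in>{0..2*m}. int (2*m choose r))
         * (\<Prod>j\<in>{0..2*m}. \<Prod>i\<in>{0..<j}. (int j ^ 2 - int i ^ 2) ^ 2)"
  proof -
    have s1: "{0..2*m} = {..<n}" by (auto simp: n_def)
    have s2: "{0..<j} = {..<j}" for j :: nat by auto
    show ?thesis unfolding dXY dT s1 s2 x_def by (simp add: n_def algebra_simps)
  qed
  finally show ?thesis unfolding fac n_def .
qed



lemma fact_int_prod: "(fact n :: int) = (\<Prod>k\<in>{1..n}. int k)"
  by (simp add: fact_prod)

lemma prod_even_odd: "(\<Prod>i\<in>{1..m}. 2 * int i) * (\<Prod>i\<in>{1..m}. 2 * int i - 1) = fact (2*m)"
proof (induction m)
  case 0 then show ?case by simp
next
  case (Suc m)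
  have e: "2 * Suc m = Suc (Suc (2*m))" by simp
  have "(\<Prod>i\<in>{1..Suc m}. 2 * int i) * (\<Prod>i\<in>{1..Suc m}. 2 * int i - 1)
     = ((\<Prod>i\<in>{1..m}. 2 * int i) * (\<Prod>i\<in>{1..m}. 2 * int i - 1)) * ((2 * int m + 2) * (2 * int m + 1))"
    by (simp add: prod.nat_ivl_Suc' algebra_simps)
  also have "\<dots> = fact (2 * Suc m)" unfolding Suc.IH e by (simp add: algebra_simps)
  finally show ?case .
qed

lemma prod_neg: "finite A \<Longrightarrow> (\<Prod>i\<in>A. - (f i::int)) = (-1)^(card A) * prod f A"
  by (induction A rule: finite_induct) auto

context
  fixes p :: int and m :: nat
  assumes pr: "prime p" and pm: "p = 4 * int m + 1"
begin

lemma m_pos: "m \<ge> 1"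
proof (rule ccontr)
  assume "\<not> m \<ge> 1"
  then have "p = 1" using pm by simp
  then show False using pr by simp
qed

lemma p_nat1: "prime (nat p)"
  using pr prime_int_nat_transfer by blast

lemma p_nat2: "int (nat p) = p"
  using pm by simp

lemma p_nat3: "nat p - 1 = 4 * m"
  using pm by (simp add: nat_add_distrib nat_mult_distrib)

lemma p_nat4: "2 < nat p"
  using pm m_pos by (simp add: nat_add_distrib nat_mult_distrib)

lemmas p_nat = p_nat1 p_nat2 p_nat3 p_nat4

lemma leg_pow: "[Legendre a p = a ^ (2*m)] (mod p)"
proof -
  have "[Legendre a (int (nat p)) = a ^ ((nat p - 1) div 2)] (mod int (nat p))"
    by (rule euler_criterion) (use p_nat in auto)
  then show ?thesis using p_nat by simp
qed

lemma sq_pow: assumes "\<not> p dvd a" shows "[a ^ (4*m) = 1] (mod p)"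
proof -
  have "\<not> p dvd a^2" using assms pr by (simp add: prime_dvd_power_iff)
  moreover have "QuadRes p (a^2)" unfolding QuadRes_def by (rule exI[of _ a]) simp
  ultimately have "Legendre (a^2) p = 1" unfolding Legendre_def
    by (auto simp: cong_0_iff)
  then have "[1 = (a^2) ^ (2*m)] (mod p)" using leg_pow[of "a^2"] by simp
  then show ?thesis by (simp add: power_mult[symmetric] cong_sym mult.commute)
qed

lemma leg_one: assumes "[a ^ (2*m) = 1] (mod p)" shows "Legendre a p = 1"
proof -
  have c: "[Legendre a p = 1] (mod p)" using leg_pow[of a] assms cong_trans by blast
  have p5: "p \<ge> 5" using pm m_pos by simp
  show ?thesis
  proof (cases "Legendre a p = 0")
    case True
    then have "p dvd 1" using c by (simp add: cong_iff_dvd_diff)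
    then show ?thesis using p5 by (simp add: zdvd_not_zless)
  next
    case False
    show ?thesis
    proof (rule ccontr)
      assume "Legendre a p \<noteq> 1"
      then have "Legendre a p = -1" using False unfolding Legendre_def by (auto split: if_splits)
      then have "p dvd 2" using c by (simp add: cong_iff_dvd_diff dvd_minus_iff)
      then show False using p5 zdvd_imp_le by fastforce
    qed
  qed
qed

lemma not_dvd_fact: assumes "r \<le> 2*m" shows "\<not> p dvd fact r"
proof
  assume "p dvd fact r"
  then have "int (nat p) dvd int (fact r)" using p_nat by simp
  then have "nat p dvd fact r" by (simp only: int_dvd_int_iff)
  then have "nat p \<le> r" using prime_dvd_fact_iff[OF p_nat(1)] by simp
  then show False using assms pm by simp
qed

lemma wilson_half: "[(fact (2*m) :: int)^2 = -1] (mod p)"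
proof -
  have w: "[fact (4*m) = (-1::int)] (mod p)"
    using wilson_theorem[OF p_nat(1)] p_nat by simp
  have "(fact (4*m) :: int) = (\<Prod>k\<in>{1..2*m + 2*m}. int k)" by (simp add: fact_int_prod)
  also have "\<dots> = (\<Prod>k\<in>{1..2*m}. int k) * (\<Prod>k\<in>{2*m+1..2*m + 2*m}. int k)"
    by (rule prod.ub_add_nat) simp
  also have "(\<Prod>k\<in>{2*m+1..2*m + 2*m}. int k) = (\<Prod>i\<in>{1..2*m}. int (2*m + i))"
    using prod.atLeastAtMost_shift_bounds[of "\<lambda>k. int k" 1 "2*m" "2*m"] by (simp add: add.commute comp_def)
  finally have f: "(fact (4*m) :: int) = fact (2*m) * (\<Prod>i\<in>{1..2*m}. int (2*m + i))"
    by (simp add: fact_int_prod)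
  have "[(\<Prod>i\<in>{1..2*m}. int (2*m + i)) = (\<Prod>i\<in>{1..2*m}. - int (2*m + 1 - i))] (mod p)"
  proof (rule cong_prod)
    fix i assume "i \<in> {1..2*m}"
    then have "int (2*m + i) - (- int (2*m + 1 - i)) = p" using pm by auto
    then show "[int (2*m + i) = - int (2*m + 1 - i)] (mod p)"
      by (simp add: cong_iff_dvd_diff)
  qed
  also have "(\<Prod>i\<in>{1..2*m}. - int (2*m + 1 - i)) = (\<Prod>i\<in>{1..2*m}. int (2*m + 1 - i))"
    by (subst prod_neg) simp_all
  also have "\<dots> = (\<Prod>i\<in>{1..2*m}. int i)"
    using prod.atLeastAtMost_rev[of "\<lambda>i. int i" 1 "2*m"] by (simp add: add.commute)
  also have "\<dots> = fact (2*m)" by (simp add: fact_int_prod)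
  finally have "[fact (4*m) = (fact (2*m) :: int) * fact (2*m)] (mod p)"
    unfolding f by (rule cong_scalar_left)
  from cong_trans[OF cong_sym[OF this] w] show ?thesis by (simp add: power2_eq_square)
qed

lemma two_pow: "[(2::int) ^ (2*m) = (-1) ^ m] (mod p)"
proof -
  have "(2::int) ^ (2*m) * fact (2*m) = (\<Prod>k\<in>{1..2*m}. 2 * int k)"
    by (simp add: fact_int_prod prod.distrib)
  also have "\<dots> = (\<Prod>k\<in>{1..m + m}. 2 * int k)"
    by (rule arg_cong[where f="\<lambda>n. (\<Prod>k\<in>{1..n}. 2 * int k)"]) simp
  also have "\<dots> = (\<Prod>k\<in>{1..m}. 2 * int k) * (\<Prod>k\<in>{m+1..m + m}. 2 * int k)"
    by (rule prod.ub_add_nat) simp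
  also have "(\<Prod>k\<in>{m+1..m + m}. 2 * int k) = (\<Prod>i\<in>{1..m}. 2 * int (m + i))"
    using prod.atLeastAtMost_shift_bounds[of "\<lambda>k. 2 * int k" 1 m m] by (simp add: add.commute comp_def)
  also have "\<dots> = (\<Prod>i\<in>{1..m}. 2 * int (m + (m + 1 - i)))"
    using prod.atLeastAtMost_rev[of "\<lambda>i. 2 * int (m + i)" 1 m] by (simp add: add.commute)
  finally have e: "(2::int) ^ (2*m) * fact (2*m) = (\<Prod>k\<in>{1..m}. 2 * int k) * (\<Prod>i\<in>{1..m}. 2 * int (m + (m + 1 - i)))" .
  have "[(\<Prod>i\<in>{1..m}. 2 * int (m + (m + 1 - i))) = (\<Prod>i\<in>{1..m}. - (2 * int i - 1))] (mod p)"
  proof (rule cong_prod)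
    fix i assume "i \<in> {1..m}"
    then have "2 * int (m + (m + 1 - i)) - (- (2 * int i - 1)) = p" using pm by auto
    then show "[2 * int (m + (m + 1 - i)) = - (2 * int i - 1)] (mod p)"
      by (simp add: cong_iff_dvd_diff)
  qed
  also have "(\<Prod>i\<in>{1..m}. - (2 * int i - 1)) = (-1) ^ m * (\<Prod>i\<in>{1..m}. 2 * int i - 1)"
    by (subst prod_neg) simp_all
  finally have "[(2::int) ^ (2*m) * fact (2*m) = (\<Prod>k\<in>{1..m}. 2 * int k) * ((-1) ^ m * (\<Prod>i\<in>{1..m}. 2 * int i - 1))] (mod p)"
    unfolding e by (rule cong_scalar_left)
  also have "(\<Prod>k\<in>{1..m}. 2 * int k) * ((-1) ^ m * (\<Prod>i\<in>{1..m}. 2 * int i - 1)) = (-1) ^ m * fact (2*m)"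
    using prod_even_odd[of m] by (simp add: algebra_simps)
  finally have c: "[2 ^ (2*m) * fact (2*m) = (-1) ^ m * (fact (2*m) :: int)] (mod p)" .
  have cop: "coprime (fact (2*m)) p"
    using not_dvd_fact[of "2*m"] pr by (simp add: prime_imp_coprime coprime_commute)
  show ?thesis using c cong_mult_rcancel[OF cop] by simp
qed

end

lemma det_cong_mod:
  fixes A B :: "int mat"
  assumes A: "A \<in> carrier_mat n n" and B: "B \<in> carrier_mat n n"
    and c: "\<And>i j. i < n \<Longrightarrow> j < n \<Longrightarrow> [A $$ (i,j) = B $$ (i,j)] (mod p)"
  shows "[det A = det B] (mod p)"
  unfolding det_def'[OF A] det_def'[OF B]
proof (rule cong_sum)
  fix q assume q: "q \<in> {q. q permutes {0..<n}}"
  show "[signof q * (\<Prod>i = 0..<n. A $$ (i, q i)) = signof q * (\<Prod>i = 0..<n. B $$ (i, q i))] (mod p)"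
  proof (rule cong_mult[OF cong_refl], rule cong_prod)
    fix i assume "i \<in> {0..<n}"
    then show "[A $$ (i, q i) = B $$ (i, q i)] (mod p)"
      using q by (intro c) (auto simp: permutes_in_image)
  qed
qed

lemma binom_prod_identity:
  "(\<Prod>r\<in>{0..n}. int (n choose r)) * (\<Prod>r\<in>{0..n}. (fact r :: int))^2 = (fact n :: int) ^ (n+1)"
proof -
  have rev: "(\<Prod>r\<in>{0..n}. (fact (n - r) :: int)) = (\<Prod>r\<in>{0..n}. fact r)"
    using prod.atLeastAtMost_rev[of "\<lambda>r. (fact r :: int)" 0 n] by simp
  have "(\<Prod>r\<in>{0..n}. int (n choose r)) * (\<Prod>r\<in>{0..n}. (fact r :: int))^2
      = (\<Prod>r\<in>{0..n}. int (n choose r)) * (\<Prod>r\<in>{0..n}. (fact r :: int)) * (\<Prod>r\<in>{0..n}. (fact (n - r) :: int))"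
    unfolding rev by (simp add: power2_eq_square)
  also have "\<dots> = (\<Prod>r\<in>{0..n}. int (n choose r) * fact r * fact (n - r))"
    by (simp add: prod.distrib)
  also have "\<dots> = (\<Prod>r\<in>{0..n}. (fact n :: int))"
  proof (rule prod.cong[OF refl])
    fix r assume "r \<in> {0..n}"
    then have "fact r * fact (n - r) * (n choose r) = fact n" by (intro binomial_fact_lemma) auto
    then have "(of_nat (fact r * fact (n - r) * (n choose r)) :: int) = of_nat (fact n)" by simp
    then show "int (n choose r) * fact r * fact (n - r) = (fact n :: int)"
      by (simp add: of_nat_mult algebra_simps)
  qed
  also have "\<dots> = fact n ^ (n+1)" by simp
  finally show ?thesis .
qed

lemma pm1_sq: "(d::int) \<in> {1, -1} \<Longrightarrow> d^2 = 1"
  by auto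

theorem corollary1p3:
  fixes p :: int and m :: nat and d1 d2 :: int
  assumes "prime p" and "p = 4 * int m + 1"
    and "d1 \<in> {1, -1}" and "d2 \<in> {1, -1}"
  shows "\<not> p dvd (2 * det (legmat p m d1 d2)) \<and> QuadRes p (2 * det (legmat p m d1 d2))
    \<and> [det (legmat p m d1 d2) =
         (-1) ^ (m * (2*m+1)) * d1 ^ (2*m+1) * d2 ^ (m * (2*m+1))
         * (\<Prod>r\<in>{0..2*m}. int (2*m choose r))
         * (\<Prod>j\<in>{0..2*m}. \<Prod>i\<in>{0..<j}. (int j ^ 2 - int i ^ 2) ^ 2)] (mod p)"
proof -
  note pr = assms(1) and pm = assms(2)
  have m1: "m \<ge> 1" by (rule m_pos[OF pr pm])
  define n where "n = 2*m+1"
  define Bm where "Bm = mat n n (\<lambda>(j,k). (int j + int k)^(2*m) + (int j - int k)^(2*m)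
                          + d1 * (int j ^ 2 + d2 * int k ^ 2)^(2*m))"
  define S where "S = (-1::int) ^ (m * (2*m+1)) * d1 ^ (2*m+1) * d2 ^ (m * (2*m+1))"
  define Cp where "Cp = (\<Prod>r\<in>{0..2*m}. int (2*m choose r))"
  define V where "V = (\<Prod>j\<in>{0..2*m}. \<Prod>i\<in>{0..<j}. (int j ^ 2 - int i ^ 2))"
  define R where "R = S * Cp * V^2"
  have V2: "(\<Prod>j\<in>{0..2*m}. \<Prod>i\<in>{0..<j}. (int j ^ 2 - int i ^ 2) ^ 2) = V^2"
    unfolding V_def by (simp add: prod_power_distrib)
  have dB: "det Bm = R"
    unfolding Bm_def n_def R_def S_def Cp_def V2[symmetric] by (rule det_main[OF m1])
  have c1: "[det (legmat p m d1 d2) = det Bm] (mod p)"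
  proof (rule det_cong_mod)
    show "legmat p m d1 d2 \<in> carrier_mat n n" by (simp add: legmat_def n_def)
    show "Bm \<in> carrier_mat n n" by (simp add: Bm_def)
    fix j k assume j: "j < n" and k: "k < n"
    have "[Legendre (int j + int k) p + Legendre (int j - int k) p + d1 * Legendre (int j ^ 2 + d2 * int k ^ 2) p
        = (int j + int k)^(2*m) + (int j - int k)^(2*m) + d1 * (int j ^ 2 + d2 * int k ^ 2)^(2*m)] (mod p)"
      by (intro cong_add cong_mult cong_refl leg_pow[OF pr pm])
    then show "[legmat p m d1 d2 $$ (j, k) = Bm $$ (j, k)] (mod p)"
      using j k by (simp add: legmat_def Bm_def n_def)
  qed
  then have c2: "[det (legmat p m d1 d2) = R] (mod p)" using dB by simp
  have S2: "S^2 = 1"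
  proof -
    have "S^2 = ((-1::int)^2) ^ (m * (2*m+1)) * (d1^2) ^ (2*m+1) * (d2^2) ^ (m * (2*m+1))"
      unfolding S_def by (simp add: power_mult_distrib power_mult[symmetric] mult.commute)
    then show ?thesis using pm1_sq[OF assms(3)] pm1_sq[OF assms(4)] by simp
  qed
  have Vnz: "\<not> p dvd V"
  proof
    assume "p dvd V"
    then obtain j i where ji: "j \<in> {0..2*m}" "i \<in> {0..<j}" and dv: "p dvd (int j ^ 2 - int i ^ 2)"
      unfolding V_def using pr by (auto simp: prime_dvd_prod_iff)
    have "int j ^ 2 - int i ^ 2 = (int j - int i) * (int j + int i)" by (simp add: power2_eq_square algebra_simps)
    with dv pr have "p dvd (int j - int i) \<or> p dvd (int j + int i)" by (simp add: prime_dvd_mult_iff)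
    moreover have "0 < int j - int i" "int j - int i < p" "0 < int j + int i" "int j + int i < p"
      using ji pm by auto
    ultimately show False using zdvd_imp_le by fastforce
  qed
  define F where "F = (\<Prod>r\<in>{0..2*m}. (fact r :: int))"
  have Fnz: "\<not> p dvd F"
    unfolding F_def using pr not_dvd_fact[OF pr pm] by (auto simp: prime_dvd_prod_iff)
  have CF: "Cp * F^2 = fact (2*m) ^ (2*m+1)"
    unfolding Cp_def F_def by (rule binom_prod_identity)
  have ex: "(2*m+1)*(2*m) = 2*(m*(2*m+1))" by (simp add: algebra_simps)
  have e: "(fact (2*m) ^ (2*m+1) :: int) ^ (2*m) = (fact (2*m) ^ 2) ^ (m * (2*m+1))"
    unfolding power_mult[symmetric] ex ..
  have "[(Cp * F^2) ^ (2*m) = (fact (2*m) ^ 2) ^ (m * (2*m+1))] (mod p)"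
    unfolding CF e by (rule cong_refl)
  moreover have "[(fact (2*m) ^ 2 :: int) ^ (m * (2*m+1)) = (-1) ^ (m * (2*m+1))] (mod p)"
    by (intro cong_pow wilson_half[OF pr pm])
  ultimately have a1: "[Cp^(2*m) * F^(4*m) = (-1) ^ (m * (2*m+1))] (mod p)"
    by (simp add: power_mult_distrib power_mult[symmetric] mult.commute cong_trans)
  have "[Cp^(2*m) * F^(4*m) = Cp^(2*m) * 1] (mod p)"
    by (intro cong_mult cong_refl sq_pow[OF pr pm Fnz])
  then have Cpow: "[Cp^(2*m) = (-1) ^ (m * (2*m+1))] (mod p)"
    using a1 by (metis cong_sym cong_trans mult_1_right)
  have Vpow: "[(V^2)^(2*m) = 1] (mod p)"
    using sq_pow[OF pr pm Vnz] by (simp add: power_mult[symmetric] mult.commute)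
  have Spow: "S^(2*m) = 1" using S2 by (simp add: power_mult)
  have "(2*R)^(2*m) = 2^(2*m) * S^(2*m) * Cp^(2*m) * (V^2)^(2*m)"
    unfolding R_def by (simp add: power_mult_distrib)
  also have "[\<dots> = (-1)^m * 1 * (-1) ^ (m * (2*m+1)) * 1] (mod p)"
    unfolding Spow by (intro cong_mult two_pow[OF pr pm] cong_refl Cpow Vpow)
  also have "(-1::int)^m * 1 * (-1) ^ (m * (2*m+1)) * 1 = 1"
  proof -
    have "m + m * (2*m+1) = 2 * (m * (m+1))" by (simp add: algebra_simps)
    then have "(-1::int)^m * (-1) ^ (m * (2*m+1)) = ((-1)^2)^(m * (m+1))"
      by (metis power_add power_mult)
    then show ?thesis by simp
  qed
  finally have R1: "[(2*R)^(2*m) = 1] (mod p)" .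
  have "[(2 * det (legmat p m d1 d2))^(2*m) = (2*R)^(2*m)] (mod p)"
    by (intro cong_pow cong_mult cong_refl c2)
  then have "[(2 * det (legmat p m d1 d2))^(2*m) = 1] (mod p)" using R1 cong_trans by blast
  then have L: "Legendre (2 * det (legmat p m d1 d2)) p = 1" by (rule leg_one[OF pr pm])
  then have "\<not> [2 * det (legmat p m d1 d2) = 0] (mod p) \<and> QuadRes p (2 * det (legmat p m d1 d2))"
    unfolding Legendre_def by (auto split: if_splits)
  then show ?thesis using c2 unfolding R_def S_def Cp_def V2[symmetric]
    by (simp add: cong_0_iff)
qed

end
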